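(* Fix $0<d<1$ and let $c(x)=x^d$. For games with $n$ jobs and cost function $c$, the worst-case price of anarchy of the coordination mechanism described in the context is $\Omega\!\left(n^{d(1-d)}\right)$.
   Context: A game consists of a cost function $c$ (here $c(x)=x^d$, $c(0)=0$), slots $t=1,\dots,T$, and a set of $n$ jobs, each job $j$ having integer release time $r_j$ and deadline $d_j$ with $0<r_j<d_j<T$. An assignment $s$ gives each job a slot $s_j$ with $r_j\le s_j<d_j$; the load is $l_t(s)=|\{j:s_j=t\}|$ and $C(s)=\sum_{t=1}^T c(l_t(s))$. In the coordination mechanism, each job $j$ chooses a pair $(s_j,\xi_j)$ with $s_j\in[r_j,d_j)$ and payment $\xi_j\ge0$. Slot $t$ is opened iff $\sum_{j:s_j=t}\xi_j\ge c(l_t(s))$; a job whose slot is not opened has infinite cost, otherwise its cost is $\xi_j$. A profile $(s,\xi)$ is a Nash equilibrium if for every job $j$: (i) $\sum_{j':s_{j'}=s_j}\xi_{j'}\ge c(l_{s_j}(s))$; (ii) for every $t\in[r_j,d_j)\setminus\{s_j\}$, $\xi_j\le\max\{0,\,c(l_t(s)+1)-\sum_{j':s_{j'}=t}\xi_{j'}\}$; (iii) $\xi_j\le\max\{0,\,c(l_{s_j}(s))-\sum_{j':s_{j'}=s_j,\,j'\ne j}\xi_{j'}\}$. The price of anarchy of the mechanism on a game is $\max C(s)/\min_{s^*}C(s^* )$, the maximum over Nash equilibria $(s,\xi)$ and the minimum over all assignments; the worst case for $n$ jobs is the supremum over games with $n$ jobs. *)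

theory Defs
  imports "HOL-Analysis.Analysis"
begin

text \<open>Jobs are 0..<n; job j has release time r j and deadline dl j; slots are 1..T.
  The cost function is c(x) = x powr e (note 0 powr e = 0).\<close>

definition cst :: "real \<Rightarrow> nat \<Rightarrow> real" where
  "cst e x = real x powr e"

definition valid_game :: "nat \<Rightarrow> nat \<Rightarrow> (nat \<Rightarrow> nat) \<Rightarrow> (nat \<Rightarrow> nat) \<Rightarrow> bool" where
  "valid_game n T r dl \<longleftrightarrow> (\<forall>j<n. 0 < r j \<and> r j < dl j \<and> dl j < T)"

definition valid_assign :: "nat \<Rightarrow> (nat \<Rightarrow> nat) \<Rightarrow> (nat \<Rightarrow> nat) \<Rightarrow> (nat \<Rightarrow> nat) \<Rightarrow> bool" where
  "valid_assign n r dl s \<longleftrightarrow> (\<forall>j<n. r j \<le> s j \<and> s j < dl j)"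

definition load :: "nat \<Rightarrow> (nat \<Rightarrow> nat) \<Rightarrow> nat \<Rightarrow> nat" where
  "load n s t = card {j. j < n \<and> s j = t}"

definition total_cost :: "real \<Rightarrow> nat \<Rightarrow> nat \<Rightarrow> (nat \<Rightarrow> nat) \<Rightarrow> real" where
  "total_cost e n T s = (\<Sum>t = 1..T. cst e (load n s t))"

definition opt_cost :: "real \<Rightarrow> nat \<Rightarrow> nat \<Rightarrow> (nat \<Rightarrow> nat) \<Rightarrow> (nat \<Rightarrow> nat) \<Rightarrow> real" where
  "opt_cost e n T r dl = Inf {total_cost e n T s | s. valid_assign n r dl s}"

definition pay :: "nat \<Rightarrow> (nat \<Rightarrow> nat) \<Rightarrow> (nat \<Rightarrow> real) \<Rightarrow> nat \<Rightarrow> real" where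
  "pay n s \<xi> t = (\<Sum>j' \<in> {j'. j' < n \<and> s j' = t}. \<xi> j')"

definition is_NE :: "real \<Rightarrow> nat \<Rightarrow> (nat \<Rightarrow> nat) \<Rightarrow> (nat \<Rightarrow> nat)
                      \<Rightarrow> (nat \<Rightarrow> nat) \<Rightarrow> (nat \<Rightarrow> real) \<Rightarrow> bool" where
  "is_NE e n r dl s \<xi> \<longleftrightarrow>
     valid_assign n r dl s \<and> (\<forall>j<n. \<xi> j \<ge> 0) \<and>
     (\<forall>j<n.
        pay n s \<xi> (s j) \<ge> cst e (load n s (s j)) \<and>
        (\<forall>t \<in> {r j..<dl j} - {s j}.
            \<xi> j \<le> max 0 (cst e (load n s t + 1) - pay n s \<xi> t)) \<and>
        \<xi> j \<le> max 0 (cst e (load n s (s j))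
                   - (\<Sum>j' \<in> {j'. j' < n \<and> s j' = s j \<and> j' \<noteq> j}. \<xi> j')))"

definition worst_poa :: "real \<Rightarrow> nat \<Rightarrow> ereal" where
  "worst_poa e n = (SUP g \<in> {(T, r, dl, s, \<xi>). valid_game n T r dl \<and> is_NE e n r dl s \<xi>}.
      (case g of (T, r, dl, s, \<xi>) \<Rightarrow>
         ereal (total_cost e n T s / opt_cost e n T r dl)))"

end

theory Submission
  imports Defs
begin

definition rr :: "nat \<Rightarrow> nat \<Rightarrow> nat" where
  "rr k j = (if j < k then j + 2 else 2)"
definition dd :: "nat \<Rightarrow> nat \<Rightarrow> nat" where
  "dd k j = (if j < k then j + 3 else k + 2)"
definition sN :: "nat \<Rightarrow> nat \<Rightarrow> nat" where
  "sN k j = 2 + j mod k"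
definition sO :: "nat \<Rightarrow> nat \<Rightarrow> nat" where
  "sO k j = (if j < k then j + 2 else 2)"
definition xi :: "real \<Rightarrow> nat \<Rightarrow> nat \<Rightarrow> nat \<Rightarrow> real" where
  "xi d n k j = (if j < k then cst d (load n (sN k) (j + 2)) else 0)"

lemma cst_nonneg: "0 \<le> cst d x"
  by (simp add: cst_def)

lemma cst_mono: "0 \<le> d \<Longrightarrow> x \<le> y \<Longrightarrow> cst d x \<le> cst d y"
  by (simp add: cst_def powr_mono2)

lemma game_ok: "k > 0 \<Longrightarrow> valid_game n (k+3) (rr k) (dd k)"
  by (auto simp: valid_game_def rr_def dd_def)

lemma sN_ok: "k > 0 \<Longrightarrow> valid_assign n (rr k) (dd k) (sN k)"
  by (auto simp: valid_assign_def rr_def dd_def sN_def)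

lemma sO_ok: "k > 0 \<Longrightarrow> valid_assign n (rr k) (dd k) (sO k)"
  by (auto simp: valid_assign_def rr_def dd_def sO_def)

lemma NE_ok:
  assumes "k > 0" "0 < d"
  shows "is_NE d n (rr k) (dd k) (sN k) (xi d n k)"
  unfolding is_NE_def
proof (intro conjI allI impI)
  show "valid_assign n (rr k) (dd k) (sN k)" using sN_ok assms by blast
next
  fix j assume "j < n" show "0 \<le> xi d n k j" by (simp add: xi_def cst_nonneg)
next
  fix j assume j: "j < n"
  let ?i = "j mod k"
  have i: "?i < k" "?i \<le> j" using assms by auto
  have mem: "?i \<in> {j'. j' < n \<and> sN k j' = sN k j}" using le_less_trans[OF i(2) j] by (simp add: sN_def)
  have "xi d n k ?i \<le> pay n (sN k) (xi d n k) (sN k j)"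
    unfolding pay_def
    by (rule member_le_sum[OF mem]) (auto simp: xi_def cst_nonneg)
  moreover have "xi d n k ?i = cst d (load n (sN k) (sN k j))"
    using i by (simp add: xi_def sN_def add.commute)
  ultimately show "cst d (load n (sN k) (sN k (j))) \<le> pay n (sN k) (xi d n k) (sN k j)" by simp
next
  fix j assume j: "j < n"
  show "\<forall>t\<in>{rr k j..<dd k j} - {sN k j}.
            xi d n k j \<le> max 0 (cst d (load n (sN k) t + 1) - pay n (sN k) (xi d n k) t)"
  proof (cases "j < k")
    case True
    then have "{rr k j..<dd k j} - {sN k j} = {}" by (auto simp: rr_def dd_def sN_def)
    then show ?thesis by (metis Diff_iff empty_iff)
  qed (auto simp: xi_def)
next
  fix j assume j: "j < n"
  show "xi d n k j \<le> max 0 (cst d (load n (sN k) (sN k j))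
                   - (\<Sum>j' \<in> {j'. j' < n \<and> sN k j' = sN k j \<and> j' \<noteq> j}. xi d n k j'))"
  proof (cases "j < k")
    case True
    have "(\<Sum>j' \<in> {j'. j' < n \<and> sN k j' = sN k j \<and> j' \<noteq> j}. xi d n k j') = 0"
      by (rule sum.neutral) (use True in \<open>auto simp: xi_def sN_def\<close>)
    moreover have "xi d n k j = cst d (load n (sN k) (sN k j))"
      using True by (simp add: xi_def sN_def add.commute)
    ultimately show ?thesis by simp
  qed (auto simp: xi_def)
qed

lemma load_lower:
  assumes "k > 0" "i < k"
  shows "n div k \<le> load n (sN k) (2 + i)"
proof -
  have "inj_on (\<lambda>m. m * k + i) {..<n div k}" using assms by (auto simp: inj_on_def)
  moreover have "(\<lambda>m. m * k + i) ` {..<n div k} \<subseteq> {j. j < n \<and> sN k j = 2 + i}"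
  proof
    fix x assume "x \<in> (\<lambda>m. m * k + i) ` {..<n div k}"
    then obtain m where m: "m < n div k" "x = m * k + i" by auto
    have "m * k + k \<le> (n div k) * k" using m(1)
      by (metis Suc_leI mult_Suc mult_le_mono1 add.commute)
    also have "\<dots> \<le> n" by simp
    finally have "x < n" using m assms by linarith
    then show "x \<in> {j. j < n \<and> sN k j = 2 + i}" using m assms by (simp add: sN_def)
  qed
  ultimately have "card {..<n div k} \<le> card {j. j < n \<and> sN k j = 2 + i}"
    by (intro card_inj_on_le) auto
  then show ?thesis by (simp add: load_def)
qed

lemma NE_cost:
  assumes "k > 0" "0 < d"
  shows "real k * real (n div k) powr d \<le> total_cost d n (k+3) (sN k)"
proof -
  have "real k * real (n div k) powr d = (\<Sum>t = 2..k+1. real (n div k) powr d)" by simp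
  also have "\<dots> \<le> (\<Sum>t = 2..k+1. cst d (load n (sN k) t))"
  proof (rule sum_mono)
    fix t assume t: "t \<in> {2..k+1}"
    then have "n div k \<le> load n (sN k) (2 + (t - 2))" using assms by (intro load_lower) auto
    moreover have "2 + (t - 2) = t" using t by auto
    ultimately have "n div k \<le> load n (sN k) t" by simp
    then show "real (n div k) powr d \<le> cst d (load n (sN k) t)"
      using assms unfolding cst_def by (auto intro!: powr_mono2)
  qed
  also have "\<dots> \<le> (\<Sum>t = 1..k+3. cst d (load n (sN k) t))"
    by (rule sum_mono2) (auto simp: cst_nonneg)
  finally show ?thesis by (simp add: total_cost_def)
qed


lemma tc_ge1:
  assumes "valid_game n T r dl" "n > 0" "valid_assign n r dl s" "0 < e"
  shows "1 \<le> total_cost e n T s"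
proof -
  have s0: "s 0 \<in> {1..T}" using assms unfolding valid_game_def valid_assign_def
    by (metis atLeastAtMost_iff le_trans less_imp_le_nat less_one not_less)
  have "0 \<in> {j. j < n \<and> s j = s 0}" using assms by simp
  then have "1 \<le> load n s (s 0)" unfolding load_def
    by (metis One_nat_def Suc_leI card_gt_0_iff empty_iff finite_Collect_conjI finite_Collect_less_nat)
  then have "1 \<le> cst e (load n s (s 0))" unfolding cst_def
    using assms(4) by (simp add: ge_one_powr_ge_zero)
  also have "\<dots> \<le> total_cost e n T s" unfolding total_cost_def
    by (rule member_le_sum[OF s0]) (auto simp: cst_nonneg)
  finally show ?thesis .
qed

lemma sO_cost:
  assumes "k > 0" "0 < d"
  shows "total_cost d n (k+3) (sO k) \<le> real k + real n powr d"
proof -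
  have b: "cst d (load n (sO k) t) \<le> (if t = 2 then real n powr d else 0) + (if t \<in> {3..k+1} then 1 else 0)" for t
  proof (cases "t = 2")
    case True
    have "load n (sO k) t \<le> n" unfolding load_def
      by (metis (no_types, lifting) card_lessThan card_mono finite_lessThan lessThan_iff mem_Collect_eq subsetI)
    then show ?thesis using True assms by (simp add: cst_def powr_mono2)
  next
    case False
    have sub: "{j. j < n \<and> sO k j = t} \<subseteq> {t - 2}" using False by (auto simp: sO_def)
    have "load n (sO k) t \<le> 1" unfolding load_def
      using card_mono[OF _ sub] by simp
    moreover have "t \<notin> {3..k+1} \<Longrightarrow> load n (sO k) t = 0" unfolding load_def
      using False by (auto simp: sO_def)
    ultimately show ?thesis using False assms
      by (cases "load n (sO k) t") (auto simp: cst_def)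
  qed
  have "total_cost d n (k+3) (sO k) \<le> (\<Sum>t = 1..k+3. (if t = 2 then real n powr d else 0) + (if t \<in> {3..k+1} then 1 else 0))"
    unfolding total_cost_def by (rule sum_mono) (rule b)
  also have "\<dots> = real n powr d + (\<Sum>t = 1..k+3. (if t \<in> {3..k+1} then 1 else 0))"
    by (simp add: sum.distrib)
  also have "(\<Sum>t = 1..k+3. (if t \<in> {3..k+1} then 1 else 0)) = (\<Sum>t \<in> {1..k+3} \<inter> {3..k+1}. (1::real))"
    by (rule sum.inter_restrict[symmetric]) simp
  also have "\<dots> \<le> real k"
  proof -
    have "{1..k+3} \<inter> {3..k+1} = {3..k+1}" by auto
    then show ?thesis by simp
  qed
  finally show ?thesis by simp
qed

lemma opt_bounds:
  assumes "k > 0" "0 < d" "n > 0"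
  shows "1 \<le> opt_cost d n (k+3) (rr k) (dd k)"
    and "opt_cost d n (k+3) (rr k) (dd k) \<le> real k + real n powr d"
proof -
  let ?S = "{total_cost d n (k+3) s | s. valid_assign n (rr k) (dd k) s}"
  have ne: "?S \<noteq> {}" using sO_ok[OF assms(1)] by blast
  show "1 \<le> opt_cost d n (k+3) (rr k) (dd k)" unfolding opt_cost_def
    by (rule cInf_greatest[OF ne]) (use tc_ge1 game_ok assms in blast)
  have bdd: "bdd_below ?S"
    by (rule bdd_belowI[where m=1]) (use tc_ge1 game_ok assms in blast)
  have "opt_cost d n (k+3) (rr k) (dd k) \<le> total_cost d n (k+3) (sO k)" unfolding opt_cost_def
    by (rule cInf_lower[OF _ bdd]) (use sO_ok[OF assms(1)] in blast)
  also have "\<dots> \<le> real k + real n powr d" by (rule sO_cost[OF assms(1,2)])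
  finally show "opt_cost d n (k+3) (rr k) (dd k) \<le> real k + real n powr d" .
qed


lemma arith_bound:
  assumes d: "0 < d" "d < 1" and n: "n > 0" and big: "4 \<le> real n powr (1 - d)"
    and k: "k = nat \<lceil>real n powr d\<rceil>"
  shows "k > 0" "(1/8) * real n powr (d * (1 - d))
           \<le> real k * real (n div k) powr d / (real k + real n powr d)"
proof -
  define x where "x = real n"
  define a where "a = x powr d"
  have x1: "1 \<le> x" using n by (simp add: x_def)
  have a1: "1 \<le> a" unfolding a_def using x1 d by (simp add: ge_one_powr_ge_zero)
  have ka: "a \<le> real k" "real k < a + 1" using k a1 unfolding a_def x_def by linarith+
  show kpos: "k > 0" using ka a1 by linarith
  define q where "q = n div k"
  have "n = q * k + n mod k" by (simp add: q_def)
  moreover have "n mod k < k" using kpos by simp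
  ultimately have "n < q * k + k" by linarith
  then have "real n < real q * real k + real k" by (metis of_nat_add of_nat_less_iff of_nat_mult)
  then have "x < (real q + 1) * real k" unfolding x_def by (simp add: algebra_simps)
  then have "x / real k - 1 < real q" using kpos by (simp add: field_simps)
  moreover have "x / (2 * a) \<le> x / real k" using ka a1 x1 by (intro divide_left_mono) auto
  moreover have "x / a = x powr (1 - d)" unfolding a_def using x1 by (simp add: powr_diff)
  ultimately have "x powr (1 - d) / 2 - 1 < real q" by simp
  then have qb: "x powr (1 - d) / 4 \<le> real q" using big unfolding x_def by simp
  have "(x powr (1 - d) / 4) powr d \<le> real q powr d"
    using qb d x1 by (intro powr_mono2) auto
  moreover have "(x powr (1 - d) / 4) powr d = x powr (d * (1 - d)) / 4 powr d"
    using x1 by (simp add: powr_divide powr_powr mult.commute)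
  moreover have "4 powr d \<le> 4" using powr_mono[of d 1 4] d by simp
  moreover have "x powr (d * (1 - d)) / 4 \<le> x powr (d * (1 - d)) / 4 powr d"
    using calculation(3) by (intro divide_left_mono) auto
  ultimately have qd: "x powr (d * (1 - d)) / 4 \<le> real q powr d" by linarith
  have "real k * real q powr d / (real k + a) \<ge> real k * real q powr d / (2 * real k)"
    using ka a1 by (intro divide_left_mono) auto
  moreover have "real k * real q powr d / (2 * real k) = real q powr d / 2" using kpos by simp
  ultimately show "(1/8) * real n powr (d * (1 - d))
           \<le> real k * real (n div k) powr d / (real k + real n powr d)"
    using qd unfolding q_def a_def x_def by linarith
qed

theorem theorem7:
  fixes d :: real
  assumes "0 < d" and "d < 1"
  shows "\<exists>K>0. \<forall>\<^sub>F n in sequentially.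
           worst_poa d n \<ge> ereal (K * real n powr (d * (1 - d)))"
proof (intro exI[of _ "1/8"] conjI)
  show "(0::real) < 1/8" by simp
  define N where "N = nat \<lceil>4 powr (1 / (1 - d))\<rceil> + 1"
  show "\<forall>\<^sub>F n in sequentially. worst_poa d n \<ge> ereal (1/8 * real n powr (d * (1 - d)))"
    unfolding eventually_sequentially
  proof (intro exI[of _ N] allI impI)
    fix n assume nN: "N \<le> n"
    have n: "n > 0" using nN N_def by simp
    have "4 powr (1 / (1 - d)) \<le> real n" using nN N_def by linarith
    then have "(4 powr (1 / (1 - d))) powr (1 - d) \<le> real n powr (1 - d)"
      using assms by (intro powr_mono2) auto
    moreover have "(4 powr (1 / (1 - d))) powr (1 - d) = 4" using assms by (simp add: powr_powr)
    ultimately have big: "4 \<le> real n powr (1 - d)" by simp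
    define k where "k = nat \<lceil>real n powr d\<rceil>"
    have kpos: "k > 0" and ar: "(1/8) * real n powr (d * (1 - d))
           \<le> real k * real (n div k) powr d / (real k + real n powr d)"
      using arith_bound[OF assms n big k_def] by auto
    have ob: "1 \<le> opt_cost d n (k+3) (rr k) (dd k)" "opt_cost d n (k+3) (rr k) (dd k) \<le> real k + real n powr d"
      using opt_bounds[OF kpos assms(1) n] by auto
    have tc: "real k * real (n div k) powr d \<le> total_cost d n (k+3) (sN k)"
      using NE_cost[OF kpos assms(1)] .
    have "real k * real (n div k) powr d / (real k + real n powr d)
          \<le> total_cost d n (k+3) (sN k) / opt_cost d n (k+3) (rr k) (dd k)"
      using ob tc order_trans[OF _ tc] by (intro frac_le) auto
    with ar have "1/8 * real n powr (d * (1 - d))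
        \<le> total_cost d n (k+3) (sN k) / opt_cost d n (k+3) (rr k) (dd k)" by (rule order_trans)
    then have "ereal (1/8 * real n powr (d * (1 - d)))
        \<le> ereal (total_cost d n (k+3) (sN k) / opt_cost d n (k+3) (rr k) (dd k))" by (simp only: ereal_less_eq)
    also have "\<dots> \<le> worst_poa d n" unfolding worst_poa_def
      by (rule SUP_upper2[where i="(k+3, rr k, dd k, sN k, xi d n k)"])
         (use game_ok[OF kpos] NE_ok[OF kpos assms(1)] in auto)
    finally show "worst_poa d n \<ge> ereal (1/8 * real n powr (d * (1 - d)))" .
  qed
qed

end
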